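(* Let $A$ be a Noetherian integral domain. Every sublocalization over $A$ is a localization of $A$ if and only if each associated prime of a principal ideal of $A$ is the radical of a principal ideal. In particular, if $A$ has these equivalent properties, then nonzero principal ideals of $A$ have no embedded associated primes.
   Context: For an integral domain $A$ with field of fractions $K$, an overring is a subring of $K$ containing $A$. An overring $B$ is a localization of $A$ if $B=S^{-1}A$ for a multiplicatively closed set $S$ of nonzero elements of $A$; $B$ is a sublocalization over $A$ if $B$ is an intersection of localizations of $A$ (an empty intersection being $K$). A prime $P$ of $A$ is an associated prime of an ideal $I$ if there is $a\in A$ such that $P$ is a minimal prime over $(I:_A a)=\{r\in A: ra\in I\}$. *)

theory Defs
  imports "HOL-Computational_Algebra.Fraction_Field"
begin

text \<open>Ideal-theoretic notions for a commutative ring given as a type (the ring is all of 'a).\<close>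

definition is_ideal :: "'a::comm_ring_1 set \<Rightarrow> bool" where
  "is_ideal I \<longleftrightarrow> 0 \<in> I \<and> (\<forall>x\<in>I. \<forall>y\<in>I. x + y \<in> I) \<and> (\<forall>x\<in>I. \<forall>r. r * x \<in> I)"

definition is_prime_ideal :: "'a::comm_ring_1 set \<Rightarrow> bool" where
  "is_prime_ideal P \<longleftrightarrow> is_ideal P \<and> 1 \<notin> P \<and> (\<forall>x y. x * y \<in> P \<longrightarrow> x \<in> P \<or> y \<in> P)"

definition noetherian_ring :: "'a::comm_ring_1 itself \<Rightarrow> bool" where
  "noetherian_ring _ \<longleftrightarrow>
     (\<forall>f :: nat \<Rightarrow> 'a set. (\<forall>n. is_ideal (f n)) \<and> (\<forall>n. f n \<subseteq> f (Suc n))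
        \<longrightarrow> (\<exists>N. \<forall>n\<ge>N. f n = f N))"

definition principal_ideal :: "'a::comm_ring_1 \<Rightarrow> 'a set" where
  "principal_ideal x = {x * r | r. True}"

definition radical :: "'a::comm_ring_1 set \<Rightarrow> 'a set" where
  "radical I = {r. \<exists>n::nat. r ^ n \<in> I}"

definition colon :: "'a::comm_ring_1 set \<Rightarrow> 'a \<Rightarrow> 'a set" where
  "colon I a = {r. r * a \<in> I}"

definition minimal_prime_over :: "'a::comm_ring_1 set \<Rightarrow> 'a set \<Rightarrow> bool" where
  "minimal_prime_over P I \<longleftrightarrow> is_prime_ideal P \<and> I \<subseteq> P \<and>
     \<not> (\<exists>Q. is_prime_ideal Q \<and> I \<subseteq> Q \<and> Q \<subset> P)"

definition associated_prime :: "'a::comm_ring_1 set \<Rightarrow> 'a set \<Rightarrow> bool" where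
  "associated_prime P I \<longleftrightarrow> (\<exists>a. minimal_prime_over P (colon I a))"

definition embedded_associated_prime :: "'a::comm_ring_1 set \<Rightarrow> 'a set \<Rightarrow> bool" where
  "embedded_associated_prime P I \<longleftrightarrow> associated_prime P I \<and>
     (\<exists>Q. associated_prime Q I \<and> Q \<subset> P)"

definition mult_closed_nonzero :: "'a::idom set \<Rightarrow> bool" where
  "mult_closed_nonzero S \<longleftrightarrow> 1 \<in> S \<and> 0 \<notin> S \<and> (\<forall>s\<in>S. \<forall>t\<in>S. s * t \<in> S)"

definition localization_set :: "'a::idom set \<Rightarrow> 'a fract set" where
  "localization_set S = {Fract a s | a s. s \<in> S}"

definition is_localization :: "'a::idom fract set \<Rightarrow> bool" where
  "is_localization B \<longleftrightarrow> (\<exists>S. mult_closed_nonzero S \<and> B = localization_set S)"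

definition is_sublocalization :: "'a::idom fract set \<Rightarrow> bool" where
  "is_sublocalization B \<longleftrightarrow> (\<exists>F. (\<forall>L\<in>F. is_localization L) \<and> B = \<Inter> F)"

end

theory Submission
  imports Defs
begin


lemma ideal_0: "is_ideal I \<Longrightarrow> 0 \<in> I" by (simp add: is_ideal_def)
lemma ideal_add: "is_ideal I \<Longrightarrow> x \<in> I \<Longrightarrow> y \<in> I \<Longrightarrow> x + y \<in> I" by (simp add: is_ideal_def)
lemma ideal_mult_left: "is_ideal I \<Longrightarrow> x \<in> I \<Longrightarrow> r * x \<in> I" by (simp add: is_ideal_def)
lemma ideal_mult_right: "is_ideal I \<Longrightarrow> x \<in> I \<Longrightarrow> x * r \<in> I"
  by (metis ideal_mult_left mult.commute)
lemma ideal_uminus: "is_ideal I \<Longrightarrow> x \<in> I \<Longrightarrow> - x \<in> I"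
  by (metis ideal_mult_left mult_minus1)
lemma ideal_diff: "is_ideal I \<Longrightarrow> x \<in> I \<Longrightarrow> y \<in> I \<Longrightarrow> x - y \<in> I"
  by (metis ideal_add ideal_uminus diff_conv_add_uminus)
lemma ideal_one: "is_ideal I \<Longrightarrow> 1 \<in> I \<Longrightarrow> I = UNIV"
  by (metis UNIV_eq_I ideal_mult_left mult.right_neutral)

lemma prime_ideal: "is_prime_ideal P \<Longrightarrow> is_ideal P" by (simp add: is_prime_ideal_def)
lemma prime_one: "is_prime_ideal P \<Longrightarrow> 1 \<notin> P" by (simp add: is_prime_ideal_def)
lemma prime_mult: "is_prime_ideal P \<Longrightarrow> x * y \<in> P \<Longrightarrow> x \<in> P \<or> y \<in> P" by (simp add: is_prime_ideal_def)
lemma prime_mult_notin: "is_prime_ideal P \<Longrightarrow> x \<notin> P \<Longrightarrow> y \<notin> P \<Longrightarrow> x * y \<notin> P"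
  using prime_mult by blast
lemma prime_pow: "is_prime_ideal P \<Longrightarrow> r ^ n \<in> P \<Longrightarrow> r \<in> P"
proof (induction n)
  case 0 then show ?case using prime_one by auto
next
  case (Suc n) then show ?case using prime_mult by (metis power_Suc)
qed

lemma principal_mem: "y \<in> principal_ideal x \<longleftrightarrow> x dvd y"
  by (auto simp: principal_ideal_def dvd_def)
lemma principal_ideal: "is_ideal (principal_ideal x)"
  by (auto simp: is_ideal_def principal_mem)
lemma principal_self: "x \<in> principal_ideal x" by (simp add: principal_mem)
lemma principal_sub: "is_ideal I \<Longrightarrow> x \<in> I \<Longrightarrow> principal_ideal x \<subseteq> I"
  by (auto simp: principal_ideal_def intro: ideal_mult_right)

lemma colon_ideal: "is_ideal I \<Longrightarrow> is_ideal (colon I a)"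
  unfolding is_ideal_def colon_def by (auto simp: distrib_right mult.assoc)
lemma colon_mem: "r \<in> colon I a \<longleftrightarrow> r * a \<in> I" by (simp add: colon_def)

lemma radical_mem: "r \<in> radical I \<longleftrightarrow> (\<exists>n. r ^ n \<in> I)" by (simp add: radical_def)
lemma radical_sub: "I \<subseteq> radical I" by (auto simp: radical_def intro: exI[of _ 1])
lemma radical_prime: "is_prime_ideal P \<Longrightarrow> I \<subseteq> P \<Longrightarrow> radical I \<subseteq> P"
  by (auto simp: radical_def intro: prime_pow)

lemma ideal_Inter: "(\<And>I. I \<in> F \<Longrightarrow> is_ideal I) \<Longrightarrow> is_ideal (\<Inter>F)"
  unfolding is_ideal_def by auto

lemma prime_Inter:
  assumes "finite F" "\<And>I. I \<in> F \<Longrightarrow> is_ideal I" "is_prime_ideal Q" "\<Inter>F \<subseteq> Q"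
  shows "\<exists>I\<in>F. I \<subseteq> Q"
  using assms
proof (induction F rule: finite_induct)
  case empty then show ?case using prime_one by auto
next
  case (insert I F)
  show ?case
  proof (cases "I \<subseteq> Q")
    case True then show ?thesis by auto
  next
    case False
    then obtain x where x: "x \<in> I" "x \<notin> Q" by auto
    have "\<Inter>F \<subseteq> Q"
    proof
      fix z assume z: "z \<in> \<Inter>F"
      have "x * z \<in> I" using insert.prems(1) x(1) ideal_mult_right by blast
      moreover have "x * z \<in> \<Inter>F" using z insert.prems(1) ideal_mult_left by blast
      ultimately have "x * z \<in> Q" using insert.prems(3) by auto
      then show "z \<in> Q" using x(2) prime_mult insert.prems(2) by blast
    qed
    then show ?thesis using insert by auto
  qed
qed



lemma noeth_max:
  assumes N: "noetherian_ring TYPE('a::idom)"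
    and ne: "(C :: 'a set set) \<noteq> {}" and id: "\<And>I. I \<in> C \<Longrightarrow> is_ideal I"
  shows "\<exists>M\<in>C. \<forall>I\<in>C. M \<subseteq> I \<longrightarrow> I = M"
proof (rule ccontr)
  assume "\<not> ?thesis"
  then have step: "\<forall>M\<in>C. \<exists>I\<in>C. M \<subset> I" by auto
  define g where "g M = (SOME I. I \<in> C \<and> M \<subset> I)" for M
  have g: "g M \<in> C \<and> M \<subset> g M" if MC: "M \<in> C" for M
  proof -
    from step MC have "\<exists>I. I \<in> C \<and> M \<subset> I" by auto
    then show ?thesis unfolding g_def by (rule someI_ex)
  qed
  obtain M0 where M0: "M0 \<in> C" using ne by auto
  define f where "f n = (g ^^ n) M0" for n
  have fC: "f n \<in> C" for n
  proof (induction n)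
    case 0 then show ?case using M0 by (simp add: f_def)
  next
    case (Suc n) then show ?case using g[of "f n"] by (simp add: f_def)
  qed
  have fs: "f n \<subset> f (Suc n)" for n using g[OF fC[of n]] by (simp add: f_def)
  have "(\<forall>n. is_ideal (f n)) \<and> (\<forall>n. f n \<subseteq> f (Suc n))" using fC fs id by auto
  moreover have "(\<forall>n. is_ideal (f n)) \<and> (\<forall>n. f n \<subseteq> f (Suc n)) \<longrightarrow> (\<exists>N. \<forall>n\<ge>N. f n = f N)"
    using N unfolding noetherian_ring_def by (rule spec)
  ultimately have "\<exists>N. \<forall>n\<ge>N. f n = f N" by (rule rev_mp)
  then obtain N where NN: "\<forall>n\<ge>N. f n = f N" by blast
  have "f (Suc N) = f N" using spec[OF NN, of "Suc N"] by simp
  with fs[of N] show False by auto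
qed

definition plus_elem :: "'a::comm_ring_1 set \<Rightarrow> 'a \<Rightarrow> 'a set" where
  "plus_elem J x = {j + x * r | j r. j \<in> J}"

lemma plus_elem_mem: "w \<in> plus_elem J x \<longleftrightarrow> (\<exists>j r. j \<in> J \<and> w = j + x * r)"
  unfolding plus_elem_def by blast

lemma plus_elem_ideal:
  assumes J: "is_ideal J" shows "is_ideal (plus_elem J x)"
  unfolding is_ideal_def
proof (intro conjI ballI allI)
  show "0 \<in> plus_elem J x" unfolding plus_elem_mem using ideal_0[OF J] by (intro exI[of _ 0]) auto
next
  fix a b assume "a \<in> plus_elem J x" "b \<in> plus_elem J x"
  then obtain j r j' r' where "j \<in> J" "a = j + x * r" "j' \<in> J" "b = j' + x * r'"
    unfolding plus_elem_mem by blast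
  then show "a + b \<in> plus_elem J x" unfolding plus_elem_mem
    by (intro exI[of _ "j + j'"] exI[of _ "r + r'"]) (simp add: ideal_add J algebra_simps)
next
  fix a c assume "a \<in> plus_elem J x"
  then obtain j r where "j \<in> J" "a = j + x * r" unfolding plus_elem_mem by blast
  then show "c * a \<in> plus_elem J x" unfolding plus_elem_mem
    by (intro exI[of _ "c * j"] exI[of _ "c * r"]) (simp add: ideal_mult_left J algebra_simps)
qed

lemma plus_elem_sub: "J \<subseteq> plus_elem J x"
proof
  fix w assume "w \<in> J" then show "w \<in> plus_elem J x" unfolding plus_elem_mem by (intro exI[of _ w] exI[of _ 0]) simp
qed

lemma plus_elem_x: "is_ideal J \<Longrightarrow> x \<in> plus_elem J x"
  unfolding plus_elem_mem by (rule exI[of _ 0], rule exI[of _ 1]) (simp add: ideal_0)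

lemma plus_elem_least: "is_ideal K \<Longrightarrow> J \<subseteq> K \<Longrightarrow> x \<in> K \<Longrightarrow> plus_elem J x \<subseteq> K"
  unfolding plus_elem_def by (auto intro: ideal_add ideal_mult_right)

lemma decomp:
  assumes N: "noetherian_ring TYPE('a::idom)" and J: "is_ideal (J :: 'a set)"
  shows "\<exists>\<Pi>. finite \<Pi> \<and> (\<forall>Q\<in>\<Pi>. is_prime_ideal Q \<and> J \<subseteq> Q) \<and> \<Inter>\<Pi> \<subseteq> radical J"
proof (rule ccontr)
  let ?G = "\<lambda>J::'a set. \<exists>\<Pi>. finite \<Pi> \<and> (\<forall>Q\<in>\<Pi>. is_prime_ideal Q \<and> J \<subseteq> Q) \<and> \<Inter>\<Pi> \<subseteq> radical J"
  assume "\<not> ?G J"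
  then have "{J. is_ideal J \<and> \<not> ?G J} \<noteq> {}" using J by blast
  from noeth_max[OF N this] obtain M where MC: "M \<in> {J. is_ideal J \<and> \<not> ?G J}"
    and maxC: "\<forall>I\<in>{J. is_ideal J \<and> \<not> ?G J}. M \<subseteq> I \<longrightarrow> I = M" by auto
  have M: "is_ideal M" "\<not> ?G M" using MC by simp_all
  have max: "I = M" if "is_ideal I" "\<not> ?G I" "M \<subseteq> I" for I
    using maxC that by simp
  have "1 \<notin> M"
  proof
    assume "1 \<in> M"
    then have "M = UNIV" by (rule ideal_one[OF M(1)])
    then have "?G M" by (intro exI[of _ "{}"]) (auto simp: radical_def)
    with M(2) show False by blast
  qed
  have "\<not> is_prime_ideal M"
  proof
    assume "is_prime_ideal M"
    then have "?G M" by (intro exI[of _ "{M}"]) (auto simp: radical_sub)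
    with M(2) show False by blast
  qed
  then obtain x y where xy: "x * y \<in> M" "x \<notin> M" "y \<notin> M"
    using M(1) \<open>1 \<notin> M\<close> unfolding is_prime_ideal_def by blast
  have Gx: "?G (plus_elem M x)"
  proof (rule ccontr)
    assume nG: "\<not> ?G (plus_elem M x)"
    have "plus_elem M x = M" by (rule max[OF plus_elem_ideal[OF M(1)] nG plus_elem_sub])
    with plus_elem_x[OF M(1)] xy show False by auto
  qed
  have Gy: "?G (plus_elem M y)"
  proof (rule ccontr)
    assume nG: "\<not> ?G (plus_elem M y)"
    have "plus_elem M y = M" by (rule max[OF plus_elem_ideal[OF M(1)] nG plus_elem_sub])
    with plus_elem_x[OF M(1)] xy show False by auto
  qed
  obtain \<Pi>1 where P1: "finite \<Pi>1" "\<forall>Q\<in>\<Pi>1. is_prime_ideal Q \<and> plus_elem M x \<subseteq> Q"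
    "\<Inter>\<Pi>1 \<subseteq> radical (plus_elem M x)" using Gx by blast
  obtain \<Pi>2 where P2: "finite \<Pi>2" "\<forall>Q\<in>\<Pi>2. is_prime_ideal Q \<and> plus_elem M y \<subseteq> Q"
    "\<Inter>\<Pi>2 \<subseteq> radical (plus_elem M y)" using Gy by blast
  have "?G M"
  proof (intro exI[of _ "\<Pi>1 \<union> \<Pi>2"] conjI ballI)
    show "finite (\<Pi>1 \<union> \<Pi>2)" using P1 P2 by auto
    fix Q assume "Q \<in> \<Pi>1 \<union> \<Pi>2"
    then show "is_prime_ideal Q" using P1 P2 by auto
  next
    fix Q assume Q: "Q \<in> \<Pi>1 \<union> \<Pi>2"
    show "M \<subseteq> Q" using Q P1(2) P2(2) plus_elem_sub[of M x] plus_elem_sub[of M y] by blast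
  next
    show "\<Inter>(\<Pi>1 \<union> \<Pi>2) \<subseteq> radical M"
    proof
      fix w assume w: "w \<in> \<Inter>(\<Pi>1 \<union> \<Pi>2)"
      then have "w \<in> radical (plus_elem M x)" "w \<in> radical (plus_elem M y)" using P1 P2 by auto
      then obtain m k where "w ^ m \<in> plus_elem M x" "w ^ k \<in> plus_elem M y"
        unfolding radical_mem by blast
      then obtain j1 j2 r1 r2 where
        e1: "w ^ m = j1 + x * r1" "j1 \<in> M" and e2: "w ^ k = j2 + y * r2" "j2 \<in> M"
        unfolding plus_elem_mem by blast
      have "w ^ (m + k) = j1 * j2 + j1 * (y * r2) + j2 * (x * r1) + (x * y) * (r1 * r2)"
        by (simp add: power_add e1 e2 algebra_simps)
      also have "\<dots> \<in> M"
        using ideal_mult_right[OF M(1) e1(2)] ideal_mult_right[OF M(1) e2(2)]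
          ideal_mult_right[OF M(1) xy(1)]
        by (intro ideal_add[OF M(1)]) auto
      finally show "w \<in> radical M" unfolding radical_mem by (rule exI)
    qed
  qed
  with M(2) show False by blast
qed

lemma decomp_min:
  assumes N: "noetherian_ring TYPE('a::idom)" and J: "is_ideal (J :: 'a set)"
  shows "\<exists>\<Pi>. finite \<Pi> \<and> (\<forall>Q\<in>\<Pi>. minimal_prime_over Q J) \<and> \<Inter>\<Pi> \<subseteq> radical J"
proof -
  obtain \<Pi> where P1: "finite \<Pi>" and P2: "\<And>Q. Q \<in> \<Pi> \<Longrightarrow> is_prime_ideal Q \<and> J \<subseteq> Q"
    and P3: "\<Inter>\<Pi> \<subseteq> radical J"
    using decomp[OF N J] by auto
  define \<Pi>' where "\<Pi>' = {Q\<in>\<Pi>. \<forall>Q'\<in>\<Pi>. Q' \<subseteq> Q \<longrightarrow> Q' = Q}"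
  have fin: "finite \<Pi>'" using P1 by (simp add: \<Pi>'_def)
  have below: "\<exists>Q0\<in>\<Pi>'. Q0 \<subseteq> Q" if QP: "Q \<in> \<Pi>" for Q
  proof -
    obtain m where m: "m \<in> \<Pi>" "m \<le> Q" "\<forall>b\<in>\<Pi>. b \<le> m \<longrightarrow> m = b"
      using finite_has_minimal2[OF P1 QP] by auto
    then have "m \<in> \<Pi>'" unfolding \<Pi>'_def by auto
    with m(2) show ?thesis by auto
  qed
  have sub: "\<Inter>\<Pi>' \<subseteq> \<Inter>\<Pi>"
  proof
    fix w assume w: "w \<in> \<Inter>\<Pi>'"
    show "w \<in> \<Inter>\<Pi>"
    proof
      fix Q assume "Q \<in> \<Pi>"
      then obtain Q0 where "Q0 \<in> \<Pi>'" "Q0 \<subseteq> Q" using below by auto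
      with w show "w \<in> Q" by auto
    qed
  qed
  have mp: "minimal_prime_over Q J" if Q: "Q \<in> \<Pi>'" for Q
    unfolding minimal_prime_over_def
  proof (intro conjI notI)
    have QP: "Q \<in> \<Pi>" using Q by (simp add: \<Pi>'_def)
    then show "is_prime_ideal Q" "J \<subseteq> Q" using P2 by auto
    assume "\<exists>Q'. is_prime_ideal Q' \<and> J \<subseteq> Q' \<and> Q' \<subset> Q"
    then obtain Q' where Q': "is_prime_ideal Q'" "J \<subseteq> Q'" "Q' \<subset> Q" by auto
    have "\<Inter>\<Pi> \<subseteq> Q'" using P3 radical_prime[OF Q'(1,2)] by (rule order_trans)
    moreover have "\<And>I. I \<in> \<Pi> \<Longrightarrow> is_ideal I" using P2 prime_ideal by auto
    ultimately obtain Q1 where Q1: "Q1 \<in> \<Pi>" "Q1 \<subseteq> Q'"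
      using prime_Inter[OF P1 _ Q'(1)] by auto
    have "Q1 \<subseteq> Q" using Q1(2) Q'(3) by auto
    then have "Q1 = Q" using Q Q1(1) unfolding \<Pi>'_def by auto
    then show False using Q1(2) Q'(3) by auto
  qed
  show ?thesis using fin sub P3 mp by (intro exI[of _ \<Pi>']) auto
qed



lemma mc_nz: "mult_closed_nonzero T \<Longrightarrow> t \<in> T \<Longrightarrow> t \<noteq> 0"
  unfolding mult_closed_nonzero_def by auto
lemma mc_one: "mult_closed_nonzero T \<Longrightarrow> 1 \<in> T"
  unfolding mult_closed_nonzero_def by auto
lemma mc_mult: "mult_closed_nonzero T \<Longrightarrow> s \<in> T \<Longrightarrow> t \<in> T \<Longrightarrow> s * t \<in> T"
  unfolding mult_closed_nonzero_def by auto
lemma mc_pow: "mult_closed_nonzero T \<Longrightarrow> t \<in> T \<Longrightarrow> t ^ n \<in> T"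
  by (induction n) (auto intro: mc_one mc_mult)

lemma loc_mem: "u \<in> localization_set T \<longleftrightarrow> (\<exists>a s. s \<in> T \<and> u = Fract a s)"
  unfolding localization_set_def by blast

lemma loc_1: "mult_closed_nonzero T \<Longrightarrow> Fract a 1 \<in> localization_set T"
  unfolding loc_mem using mc_one by blast

lemma loc_mult:
  assumes T: "mult_closed_nonzero T" and u: "u \<in> localization_set T" and v: "v \<in> localization_set T"
  shows "u * v \<in> localization_set T"
proof -
  obtain a s b t where "s \<in> T" "u = Fract a s" "t \<in> T" "v = Fract b t"
    using u v unfolding loc_mem by blast
  then show ?thesis unfolding loc_mem using mc_mult[OF T]
    by (intro exI[of _ "a * b"] exI[of _ "s * t"]) simp
qed

lemma loc_dvd:
  assumes T: "mult_closed_nonzero T" and s: "s \<noteq> 0" and t: "t \<in> T" and d: "s dvd t"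
  shows "Fract 1 s \<in> localization_set T"
proof -
  obtain u where u: "t = s * u" using d by (auto simp: dvd_def)
  have "Fract 1 s = Fract u t"
    using s mc_nz[OF T t] by (simp add: eq_fract u)
  then show ?thesis unfolding loc_mem using t by blast
qed

lemma loc_mem_frac:
  assumes T: "mult_closed_nonzero T" and s: "s \<noteq> 0" and m: "Fract a s \<in> localization_set T"
  shows "\<exists>t\<in>T. s dvd t * a"
proof -
  obtain c t where t: "t \<in> T" "Fract a s = Fract c t" using m unfolding loc_mem by blast
  then have "a * t = c * s" using s mc_nz[OF T t(1)] by (simp add: eq_fract)
  then have "s dvd t * a" by (metis dvd_triv_right mult.commute)
  then show ?thesis using t by blast
qed



lemma locE: "is_localization L \<Longrightarrow> (\<And>T. mult_closed_nonzero T \<Longrightarrow> L = localization_set T \<Longrightarrow> thesis) \<Longrightarrow> thesis"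
  unfolding is_localization_def by blast

lemma suff:
  assumes N: "noetherian_ring TYPE('a::idom)"
    and H: "\<forall>(x::'a) P. associated_prime P (principal_ideal x) \<longrightarrow> (\<exists>y. P = radical (principal_ideal y))"
    and B: "is_sublocalization (B :: 'a fract set)"
  shows "is_localization B"
proof -
  obtain F where FL: "\<And>L. L \<in> F \<Longrightarrow> is_localization L" and BF: "B = \<Inter>F"
    using B unfolding is_sublocalization_def by blast
  have Bmult: "u * v \<in> B" if "u \<in> B" "v \<in> B" for u v
    unfolding BF
  proof
    fix L assume L: "L \<in> F"
    obtain T where T: "mult_closed_nonzero T" "L = localization_set T" using FL[OF L] by (rule locE)
    show "u * v \<in> L" using that L unfolding BF T(2) by (intro loc_mult[OF T(1)]) auto
  qed
  have B1: "Fract a 1 \<in> B" for a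
    unfolding BF
  proof
    fix L assume L: "L \<in> F"
    obtain T where T: "mult_closed_nonzero T" "L = localization_set T" using FL[OF L] by (rule locE)
    show "Fract a 1 \<in> L" unfolding T(2) by (rule loc_1[OF T(1)])
  qed
  define S where "S = {s. s \<noteq> 0 \<and> Fract 1 s \<in> B}"
  have S: "mult_closed_nonzero S"
    unfolding mult_closed_nonzero_def
  proof (intro conjI ballI)
    show "1 \<in> S" using B1[of 1] by (simp add: S_def)
    show "0 \<notin> S" by (simp add: S_def)
    fix s t assume "s \<in> S" "t \<in> S"
    then have "s \<noteq> 0" "t \<noteq> 0" "Fract 1 s \<in> B" "Fract 1 t \<in> B" by (auto simp: S_def)
    then have "s \<noteq> 0" "t \<noteq> 0" "Fract 1 s * Fract 1 t \<in> B" using Bmult[of "Fract 1 s" "Fract 1 t"] by blast+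
    then show "s * t \<in> S" by (simp add: S_def)
  qed
  have "B = localization_set S"
  proof
    show "localization_set S \<subseteq> B"
    proof
      fix u assume "u \<in> localization_set S"
      then obtain a s where s: "s \<in> S" "u = Fract a s" unfolding loc_mem by blast
      have "Fract 1 s \<in> B" using s(1) by (simp add: S_def)
      then have "Fract a 1 * Fract 1 s \<in> B" using B1[of a] Bmult by blast
      then show "u \<in> B" using s(2) by simp
    qed
  next
    show "B \<subseteq> localization_set S"
    proof
      fix u assume uB: "u \<in> B"
      obtain a s where u: "u = Fract a s" and s0: "s \<noteq> 0" by (cases u) auto
      define J where "J = colon (principal_ideal s) a"
      have Jid: "is_ideal J" unfolding J_def by (intro colon_ideal principal_ideal)
      have sJ: "s \<in> J" unfolding J_def colon_mem principal_mem by simp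
      obtain \<Pi> where fin: "finite \<Pi>" and mp: "\<forall>Q\<in>\<Pi>. minimal_prime_over Q J"
        and sub: "\<Inter>\<Pi> \<subseteq> radical J"
        using decomp_min[OF N Jid] by auto
      have "\<forall>Q\<in>\<Pi>. \<exists>y. Q = radical (principal_ideal y)"
        using H mp unfolding associated_prime_def J_def by blast
      then obtain yf where yf: "\<And>Q. Q \<in> \<Pi> \<Longrightarrow> Q = radical (principal_ideal (yf Q))"
        by metis
      have Qprime: "is_prime_ideal Q" "J \<subseteq> Q" if "Q \<in> \<Pi>" for Q
        using mp that unfolding minimal_prime_over_def by auto
      have yQ: "yf Q \<in> Q" if Q: "Q \<in> \<Pi>" for Q
      proof -
        have "yf Q \<in> radical (principal_ideal (yf Q))"
          unfolding radical_mem by (rule exI[of _ 1]) (simp add: principal_self)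
        then show ?thesis using yf[OF Q] by simp
      qed
      have ynz: "yf Q \<noteq> 0" if Q: "Q \<in> \<Pi>" for Q
      proof
        assume y0: "yf Q = 0"
        have "s \<in> Q" using sJ Qprime[OF Q] by auto
        then have "s \<in> radical (principal_ideal 0)" using yf[OF Q] y0 by simp
        then obtain n where "s ^ n \<in> principal_ideal 0" unfolding radical_mem by blast
        then have "s ^ n = 0" unfolding principal_mem by simp
        then show False using s0 by simp
      qed
      define y where "y = (\<Prod>Q\<in>\<Pi>. yf Q)"
      have y0: "y \<noteq> 0" unfolding y_def using fin ynz by simp
      have "y \<in> \<Inter>\<Pi>"
      proof
        fix Q assume Q: "Q \<in> \<Pi>"
        have "y = yf Q * (\<Prod>Q'\<in>\<Pi> - {Q}. yf Q')" unfolding y_def using fin Q by (rule prod.remove)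
        then show "y \<in> Q" using ideal_mult_right[OF prime_ideal[OF Qprime(1)[OF Q]] yQ[OF Q]] by simp
      qed
      then have "y \<in> radical J" using sub by auto
      then obtain m where "y ^ m \<in> J" unfolding radical_mem by blast
      then have "s dvd y ^ m * a" unfolding J_def colon_mem principal_mem .
      then obtain c where c: "y ^ m * a = s * c" by (auto simp: dvd_def)
      have "a * y ^ m = c * s" using c by (simp add: mult.commute)
      then have u2: "u = Fract c (y ^ m)" unfolding u using s0 y0
        by (simp add: eq_fract)
      have "Fract 1 (y ^ m) \<in> B"
        unfolding BF
      proof
        fix L assume L: "L \<in> F"
        obtain T where T: "mult_closed_nonzero T" "L = localization_set T" using FL[OF L] by (rule locE)
        have "u \<in> L" using uB L BF by auto
        then obtain t where t: "t \<in> T" "s dvd t * a"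
          using loc_mem_frac[OF T(1) s0] unfolding u T(2) by blast
        have tJ: "t \<in> J" unfolding J_def colon_mem principal_mem by (rule t(2))
        have "\<exists>e. yf Q dvd t ^ e" if Q: "Q \<in> \<Pi>" for Q
        proof -
          have "t \<in> radical (principal_ideal (yf Q))" using tJ Qprime(2)[OF Q] yf[OF Q] by auto
          then show ?thesis unfolding radical_mem principal_mem .
        qed
        then obtain ef where ef: "\<And>Q. Q \<in> \<Pi> \<Longrightarrow> yf Q dvd t ^ ef Q" by metis
        have "y dvd (\<Prod>Q\<in>\<Pi>. t ^ ef Q)" unfolding y_def by (rule prod_dvd_prod) (rule ef)
        then have "y dvd t ^ (\<Sum>Q\<in>\<Pi>. ef Q)" by (simp add: power_sum)
        then have "y ^ m dvd (t ^ (\<Sum>Q\<in>\<Pi>. ef Q)) ^ m" by (rule dvd_power_same)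
        moreover have "(t ^ (\<Sum>Q\<in>\<Pi>. ef Q)) ^ m \<in> T" using mc_pow[OF T(1) t(1)] by (simp add: power_mult[symmetric])
        ultimately show "Fract 1 (y ^ m) \<in> L" unfolding T(2)
          using loc_dvd[OF T(1)] y0 by simp
      qed
      then have "y ^ m \<in> S" using y0 by (simp add: S_def)
      then show "u \<in> localization_set S" unfolding u2 loc_mem by blast
    qed
  qed
  then show ?thesis using S unfolding is_localization_def by blast
qed



lemma mc_compl: "is_prime_ideal Q \<Longrightarrow> mult_closed_nonzero (- Q)"
  unfolding mult_closed_nonzero_def using prime_one ideal_0[OF prime_ideal] prime_mult by fastforce

lemma zero_prime: "is_prime_ideal {0::'a::idom}"
  unfolding is_prime_ideal_def is_ideal_def by auto

lemma nec:
  assumes N: "noetherian_ring TYPE('a::idom)"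
    and G: "\<forall>B :: 'a fract set. is_sublocalization B \<longrightarrow> is_localization B"
    and A: "associated_prime P (principal_ideal (x::'a))"
  shows "\<exists>y. P = radical (principal_ideal y)"
proof -
  obtain a where mpo: "minimal_prime_over P (colon (principal_ideal x) a)"
    using A unfolding associated_prime_def by blast
  define J where "J = colon (principal_ideal x) a"
  have Pprime: "is_prime_ideal P" and JP: "J \<subseteq> P"
    and Pmin: "\<And>Q. is_prime_ideal Q \<Longrightarrow> J \<subseteq> Q \<Longrightarrow> \<not> Q \<subset> P"
    using mpo unfolding minimal_prime_over_def J_def by auto
  have Jid: "is_ideal J" unfolding J_def by (intro colon_ideal principal_ideal)
  show ?thesis
  proof (cases "x = 0")
    case True
    have "a \<noteq> 0"
    proof
      assume "a = 0"
      then have "1 \<in> J" unfolding J_def colon_mem principal_mem True by simp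
      then show False using JP prime_one[OF Pprime] by auto
    qed
    then have J0: "J = {0}" unfolding J_def True by (auto simp: colon_mem principal_mem)
    have "P = {0}"
    proof (rule ccontr)
      assume "P \<noteq> {0}"
      then have "{0} \<subset> P" using JP J0 by auto
      then show False using Pmin[OF zero_prime] J0 by auto
    qed
    moreover have "radical (principal_ideal 0) = {0::'a}"
      by (auto simp: radical_mem principal_mem intro: exI[of _ 1])
    ultimately show ?thesis by blast
  next
    case x0: False
    obtain \<Pi> where fin: "finite \<Pi>" and P2: "\<And>Q. Q \<in> \<Pi> \<Longrightarrow> is_prime_ideal Q \<and> J \<subseteq> Q"
      and P3: "\<Inter>\<Pi> \<subseteq> radical J"
      using decomp[OF N Jid] by auto
    have idP: "\<And>I. I \<in> \<Pi> \<Longrightarrow> is_ideal I" using P2 prime_ideal by auto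
    have "\<Inter>\<Pi> \<subseteq> P" using P3 radical_prime[OF Pprime JP] by (rule order_trans)
    then obtain Q where Q: "Q \<in> \<Pi>" "Q \<subseteq> P" using prime_Inter[OF fin idP Pprime] by auto
    have "Q = P" using Pmin[of Q] P2[OF Q(1)] Q(2) by auto
    with Q have PPi: "P \<in> \<Pi>" by simp
    have "\<not> \<Inter>(\<Pi> - {P}) \<subseteq> P"
    proof
      assume "\<Inter>(\<Pi> - {P}) \<subseteq> P"
      then obtain Q' where Q': "Q' \<in> \<Pi> - {P}" "Q' \<subseteq> P"
        using prime_Inter[OF _ _ Pprime, of "\<Pi> - {P}"] fin idP by auto
      have "Q' = P" using Pmin[of Q'] P2[of Q'] Q' by auto
      with Q' show False by auto
    qed
    then obtain u where u: "u \<in> \<Inter>(\<Pi> - {P})" "u \<notin> P" by auto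
    have ru: "\<exists>m. (r * u) ^ m \<in> J" if r: "r \<in> P" for r
    proof -
      have "r * u \<in> \<Inter>\<Pi>"
      proof
        fix Q assume Q: "Q \<in> \<Pi>"
        show "r * u \<in> Q"
        proof (cases "Q = P")
          case True then show ?thesis using r ideal_mult_right[OF prime_ideal[OF Pprime]] by auto
        next
          case False then have "u \<in> Q" using u Q by auto
          then show ?thesis using ideal_mult_left[OF idP[OF Q]] by auto
        qed
      qed
      then have "r * u \<in> radical J" using P3 by blast
      then show ?thesis unfolding radical_mem .
    qed
    define f where "f n = colon J (u ^ n)" for n
    have fid: "is_ideal (f n)" for n unfolding f_def by (rule colon_ideal[OF Jid])
    have fmono: "f n \<subseteq> f (Suc n)" for n
    proof
      fix r assume "r \<in> f n"
      then have "r * u ^ n \<in> J" unfolding f_def colon_mem .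
      then have "r * u ^ n * u \<in> J" by (rule ideal_mult_right[OF Jid])
      then show "r \<in> f (Suc n)" unfolding f_def colon_mem by (simp add: mult_ac)
    qed
    have "(\<forall>n. is_ideal (f n)) \<and> (\<forall>n. f n \<subseteq> f (Suc n))" using fid fmono by auto
    moreover have "(\<forall>n. is_ideal (f n)) \<and> (\<forall>n. f n \<subseteq> f (Suc n)) \<longrightarrow> (\<exists>N. \<forall>n\<ge>N. f n = f N)"
      using N unfolding noetherian_ring_def by (rule spec)
    ultimately have "\<exists>N. \<forall>n\<ge>N. f n = f N" by (rule rev_mp)
    then obtain N0 where N0: "\<forall>n\<ge>N0. f n = f N0" by blast
    have fle: "f m \<subseteq> f N0" for m
    proof (cases "m \<le> N0")
      case True then show ?thesis using lift_Suc_mono_le[of f, OF fmono] by blast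
    next
      case False then show ?thesis using spec[OF N0, of m] by simp
    qed
    define a' where "a' = a * u ^ N0"
    define J' where "J' = colon (principal_ideal x) a'"
    have J'f: "J' = f N0" unfolding J'_def f_def J_def a'_def colon_def by (auto simp: mult_ac)
    have J'id: "is_ideal J'" using fid J'f by simp
    have J'P: "J' \<subseteq> P"
    proof
      fix r assume "r \<in> J'"
      then have "r \<in> colon J (u ^ N0)" using J'f unfolding f_def by simp
      then have "r * u ^ N0 \<in> P" using JP unfolding colon_mem by auto
      then show "r \<in> P" using prime_mult[OF Pprime] prime_pow[OF Pprime] u(2) by blast
    qed
    have PJ': "P \<subseteq> radical J'"
    proof
      fix r assume r: "r \<in> P"
      obtain m where "(r * u) ^ m \<in> J" using ru[OF r] by blast
      then have "r ^ m \<in> f m" unfolding f_def colon_mem by (simp add: power_mult_distrib)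
      then have "r ^ m \<in> J'" using fle J'f by auto
      then show "r \<in> radical J'" unfolding radical_mem by blast
    qed
    define F where "F = {localization_set (- Q) | Q. is_prime_ideal Q \<and> \<not> P \<subseteq> Q}"
    have FL: "is_localization L" if L: "L \<in> F" for L
    proof -
      obtain Q where Q: "L = localization_set (- Q)" "is_prime_ideal Q" using L unfolding F_def by blast
      show ?thesis unfolding is_localization_def using Q mc_compl[OF Q(2)] by blast
    qed
    have "is_sublocalization (\<Inter>F)"
      unfolding is_sublocalization_def using FL by blast
    then have "is_localization (\<Inter>F)" using G by blast
    then obtain S' where S': "mult_closed_nonzero S'" and BS: "\<Inter>F = localization_set S'"
      unfolding is_localization_def by blast
    have bF: "Fract a' x \<in> \<Inter>F"
    proof
      fix L assume "L \<in> F"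
      then obtain Q where Q: "L = localization_set (- Q)" "is_prime_ideal Q" "\<not> P \<subseteq> Q"
        unfolding F_def by blast
      have "\<not> J' \<subseteq> Q"
      proof
        assume "J' \<subseteq> Q"
        then have "radical J' \<subseteq> Q" by (rule radical_prime[OF Q(2)])
        then show False using PJ' Q(3) by auto
      qed
      then obtain t where t: "t \<in> J'" "t \<notin> Q" by auto
      then have "x dvd t * a'" unfolding J'_def colon_mem principal_mem by simp
      then obtain c where c: "t * a' = x * c" by (auto simp: dvd_def)
      have t0: "t \<noteq> 0" using t(2) ideal_0[OF prime_ideal[OF Q(2)]] by auto
      have "a' * t = c * x" using c by (simp add: mult.commute)
      then have "Fract a' x = Fract c t" using x0 t0 by (simp add: eq_fract)
      then show "Fract a' x \<in> L" unfolding Q(1) loc_mem using t(2) by blast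
    qed
    then have "Fract a' x \<in> localization_set S'" using BS by simp
    then obtain s where s: "s \<in> S'" "x dvd s * a'"
      using loc_mem_frac[OF S' x0] by blast
    have s0: "s \<noteq> 0" using mc_nz[OF S' s(1)] .
    have "s \<in> J'" unfolding J'_def colon_mem principal_mem by (rule s(2))
    then have sP: "s \<in> P" using J'P by auto
    have "P = radical (principal_ideal s)"
    proof
      show "radical (principal_ideal s) \<subseteq> P"
        by (rule radical_prime[OF Pprime principal_sub[OF prime_ideal[OF Pprime] sP]])
    next
      obtain \<Pi>s where fins: "finite \<Pi>s" and Ps2: "\<And>Q. Q \<in> \<Pi>s \<Longrightarrow> is_prime_ideal Q \<and> principal_ideal s \<subseteq> Q"
        and Ps3: "\<Inter>\<Pi>s \<subseteq> radical (principal_ideal s)"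
        using decomp[OF N principal_ideal, of s] by auto
      have "P \<subseteq> Q" if Q: "Q \<in> \<Pi>s" for Q
      proof (rule ccontr)
        assume nPQ: "\<not> P \<subseteq> Q"
        have Qp: "is_prime_ideal Q" and sQ: "s \<in> Q" using Ps2[OF Q] principal_self by auto
        have "Fract 1 s \<in> \<Inter>F" unfolding BS by (rule loc_dvd[OF S' s0 s(1)]) simp
        moreover have "localization_set (- Q) \<in> F" unfolding F_def using Qp nPQ by blast
        ultimately have "Fract 1 s \<in> localization_set (- Q)" by (rule InterD)
        then obtain t where t: "t \<in> - Q" "s dvd t * 1" using loc_mem_frac[OF mc_compl[OF Qp] s0] by blast
        have "t \<in> principal_ideal s" using t(2) by (simp add: principal_mem)
        then have "t \<in> Q" using Ps2[OF Q] by auto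
        with t(1) show False by auto
      qed
      then have "P \<subseteq> \<Inter>\<Pi>s" by auto
      then show "P \<subseteq> radical (principal_ideal s)" using Ps3 by (rule order_trans)
    qed
    then show ?thesis by blast
  qed
qed



definition sat :: "'a::comm_ring_1 set \<Rightarrow> 'a set \<Rightarrow> 'a set" where
  "sat P I = {r. \<exists>s. s \<notin> P \<and> s * r \<in> I}"
definition satd :: "'a::comm_ring_1 set \<Rightarrow> 'a set \<Rightarrow> bool" where
  "satd P I \<longleftrightarrow> (\<forall>s r. s \<notin> P \<longrightarrow> s * r \<in> I \<longrightarrow> r \<in> I)"
definition sum_id :: "'a::comm_ring_1 set \<Rightarrow> 'a set \<Rightarrow> 'a set" where
  "sum_id A B = {a + b | a b. a \<in> A \<and> b \<in> B}"

lemma sat_mem: "r \<in> sat P I \<longleftrightarrow> (\<exists>s. s \<notin> P \<and> s * r \<in> I)" by (simp add: sat_def)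
lemma satdD: "satd P I \<Longrightarrow> s \<notin> P \<Longrightarrow> s * r \<in> I \<Longrightarrow> r \<in> I" by (simp add: satd_def)
lemma sum_id_mem: "w \<in> sum_id A B \<longleftrightarrow> (\<exists>a b. a \<in> A \<and> b \<in> B \<and> w = a + b)"
  unfolding sum_id_def by blast

lemma sat_ideal:
  assumes P: "is_prime_ideal P" and I: "is_ideal I" shows "is_ideal (sat P I)"
  unfolding is_ideal_def
proof (intro conjI ballI allI)
  show "0 \<in> sat P I" unfolding sat_mem using prime_one[OF P] ideal_0[OF I] by (intro exI[of _ 1]) auto
next
  fix a b assume "a \<in> sat P I" "b \<in> sat P I"
  then obtain s t where st: "s \<notin> P" "s * a \<in> I" "t \<notin> P" "t * b \<in> I" unfolding sat_mem by blast
  have "(s * t) * (a + b) = t * (s * a) + s * (t * b)" by (simp add: algebra_simps)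
  also have "\<dots> \<in> I" by (rule ideal_add[OF I ideal_mult_left[OF I st(2)] ideal_mult_left[OF I st(4)]])
  finally show "a + b \<in> sat P I" unfolding sat_mem using prime_mult_notin[OF P st(1) st(3)] by blast
next
  fix a c assume "a \<in> sat P I"
  then obtain s where s: "s \<notin> P" "s * a \<in> I" unfolding sat_mem by blast
  have "s * (c * a) = c * (s * a)" by (simp add: algebra_simps)
  also have "\<dots> \<in> I" by (rule ideal_mult_left[OF I s(2)])
  finally show "c * a \<in> sat P I" unfolding sat_mem using s(1) by blast
qed

lemma sat_sub: "is_prime_ideal P \<Longrightarrow> I \<subseteq> sat P I"
  unfolding sat_def using prime_one by (auto intro!: exI[of _ 1])

lemma sat_satd: assumes P: "is_prime_ideal P" shows "satd P (sat P I)"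
  unfolding satd_def
proof (intro allI impI)
  fix s r assume s: "s \<notin> P" "s * r \<in> sat P I"
  then obtain t where t: "t \<notin> P" "t * (s * r) \<in> I" unfolding sat_mem by blast
  then have "(t * s) * r \<in> I" by (simp add: mult.assoc)
  then show "r \<in> sat P I" unfolding sat_mem using prime_mult_notin[OF P t(1) s(1)] by blast
qed

lemma sat_mono: "I \<subseteq> I' \<Longrightarrow> sat P I \<subseteq> sat P I'"
  unfolding sat_def by blast

lemma sat_least: "satd P K \<Longrightarrow> I \<subseteq> K \<Longrightarrow> sat P I \<subseteq> K"
  unfolding sat_def satd_def by blast

lemma satd_mono_prime: "Q \<subseteq> P \<Longrightarrow> satd Q I \<Longrightarrow> satd P I"
  unfolding satd_def by blast

lemma satd_Int: "satd P I \<Longrightarrow> satd P K \<Longrightarrow> satd P (I \<inter> K)"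
  unfolding satd_def by blast

lemma ideal_Int: "is_ideal I \<Longrightarrow> is_ideal K \<Longrightarrow> is_ideal (I \<inter> K)"
  unfolding is_ideal_def by blast

lemma sum_id_ideal:
  assumes A: "is_ideal A" and B: "is_ideal B" shows "is_ideal (sum_id A B)"
  unfolding is_ideal_def
proof (intro conjI ballI allI)
  show "0 \<in> sum_id A B" unfolding sum_id_mem using ideal_0[OF A] ideal_0[OF B] by force
next
  fix u v assume "u \<in> sum_id A B" "v \<in> sum_id A B"
  then obtain a b a' b' where ab: "a \<in> A" "b \<in> B" "u = a + b" "a' \<in> A" "b' \<in> B" "v = a' + b'"
    unfolding sum_id_mem by blast
  have "a + a' \<in> A" "b + b' \<in> B" "u + v = (a + a') + (b + b')"
    using ideal_add[OF A ab(1,4)] ideal_add[OF B ab(2,5)] ab(3,6) by (auto simp: algebra_simps)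
  then show "u + v \<in> sum_id A B" unfolding sum_id_mem by blast
next
  fix u c assume "u \<in> sum_id A B"
  then obtain a b where ab: "a \<in> A" "b \<in> B" "u = a + b" unfolding sum_id_mem by blast
  have "c * a \<in> A" "c * b \<in> B" by (rule ideal_mult_left[OF A ab(1)], rule ideal_mult_left[OF B ab(2)])
  moreover have "c * u = c * a + c * b" using ab(3) by (simp add: distrib_left)
  ultimately show "c * u \<in> sum_id A B" unfolding sum_id_mem by blast
qed

lemma sum_id_left: "is_ideal B \<Longrightarrow> A \<subseteq> sum_id A B"
proof
  fix a assume "is_ideal B" "a \<in> A" then show "a \<in> sum_id A B"
    unfolding sum_id_mem using ideal_0 by (intro exI[of _ a] exI[of _ 0]) auto
qed

lemma sum_id_right: "is_ideal A \<Longrightarrow> B \<subseteq> sum_id A B"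
proof
  fix b assume "is_ideal A" "b \<in> B" then show "b \<in> sum_id A B"
    unfolding sum_id_mem using ideal_0 by (intro exI[of _ 0] exI[of _ b]) auto
qed

lemma sum_id_mono: "A \<subseteq> A' \<Longrightarrow> B \<subseteq> B' \<Longrightarrow> sum_id A B \<subseteq> sum_id A' B'"
  unfolding sum_id_def by blast



definition DCCab :: "'a::comm_ring_1 set \<Rightarrow> 'a set \<Rightarrow> bool" where
  "DCCab P I \<longleftrightarrow> (\<forall>f. (\<forall>n. is_ideal (f n) \<and> satd P (f n) \<and> I \<subseteq> f n \<and> f (Suc n) \<subseteq> f n)
      \<longrightarrow> (\<exists>N. \<forall>n\<ge>N. f n = f N))"

lemma DCCabD:
  assumes "DCCab P I" "\<And>n. is_ideal (f n)" "\<And>n. satd P (f n)" "\<And>n. I \<subseteq> f n" "\<And>n. f (Suc n) \<subseteq> f n"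
  shows "\<exists>N. \<forall>n\<ge>N. f n = f N"
proof -
  have "(\<forall>n. is_ideal (f n) \<and> satd P (f n) \<and> I \<subseteq> f n \<and> f (Suc n) \<subseteq> f n)" using assms(2-5) by blast
  moreover have "(\<forall>n. is_ideal (f n) \<and> satd P (f n) \<and> I \<subseteq> f n \<and> f (Suc n) \<subseteq> f n)
      \<longrightarrow> (\<exists>N. \<forall>n\<ge>N. f n = f N)" using assms(1) unfolding DCCab_def by (rule spec)
  ultimately show ?thesis by (rule rev_mp)
qed

lemma DCCab_UNIV: "DCCab P UNIV"
  unfolding DCCab_def by (auto intro!: exI[of _ 0])

lemma dcc:
  assumes N: "noetherian_ring TYPE('a::idom)" and Pp: "is_prime_ideal P" and yP: "(y::'a) \<in> P"
    and rad: "\<And>p. p \<in> P \<Longrightarrow> \<exists>n. p ^ n \<in> principal_ideal y"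
    and I: "is_ideal I" "satd P I" "y \<in> I"
  shows "DCCab P I"
proof (rule ccontr)
  let ?C = "{I. is_ideal I \<and> satd P I \<and> y \<in> I \<and> \<not> DCCab P I}"
  assume "\<not> DCCab P I"
  then have "?C \<noteq> {}" using I by blast
  from noeth_max[OF N this] obtain M where MC: "M \<in> ?C"
    and maxC: "\<forall>I\<in>?C. M \<subseteq> I \<longrightarrow> I = M" by auto
  have M: "is_ideal M" "satd P M" "y \<in> M" "\<not> DCCab P M" using MC by simp_all
  have max: "K = M" if "is_ideal K" "satd P K" "y \<in> K" "\<not> DCCab P K" "M \<subseteq> K" for K
    using maxC that by simp
  have "1 \<notin> M"
  proof
    assume "1 \<in> M"
    then have "M = UNIV" by (rule ideal_one[OF M(1)])
    then show False using M(4) DCCab_UNIV[of P] by (simp only: not_True_eq_False)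
  qed
  let ?D = "{colon M r | r. r \<notin> M}"
  have "?D \<noteq> {}" using \<open>1 \<notin> M\<close> by blast
  moreover have "\<And>K. K \<in> ?D \<Longrightarrow> is_ideal K" using colon_ideal[OF M(1)] by blast
  ultimately obtain K0 where K0: "K0 \<in> ?D" and maxD: "\<forall>K\<in>?D. K0 \<subseteq> K \<longrightarrow> K = K0"
    using noeth_max[OF N] by meson
  obtain r0 where r0: "r0 \<notin> M" "K0 = colon M r0" using K0 by blast
  have maxr: "colon M r = colon M r0" if "r \<notin> M" "colon M r0 \<subseteq> colon M r" for r
  proof -
    have "colon M r \<in> ?D" using that(1) by blast
    then show ?thesis using maxD that(2) r0(2) by blast
  qed
  have colP: "colon M r0 = P"
  proof
    show "colon M r0 \<subseteq> P"
    proof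
      fix t assume "t \<in> colon M r0"
      then have "t * r0 \<in> M" by (simp add: colon_mem)
      then show "t \<in> P" using satdD[OF M(2)] r0(1) by blast
    qed
  next
    have cp: "is_prime_ideal (colon M r0)"
      unfolding is_prime_ideal_def
    proof (intro conjI allI impI)
      show "is_ideal (colon M r0)" by (rule colon_ideal[OF M(1)])
      show "1 \<notin> colon M r0" using r0(1) by (simp add: colon_mem)
      fix a b assume ab: "a * b \<in> colon M r0"
      show "a \<in> colon M r0 \<or> b \<in> colon M r0"
      proof (cases "a \<in> colon M r0")
        case True then show ?thesis by simp
      next
        case False
        then have ar: "a * r0 \<notin> M" by (simp add: colon_mem)
        have "colon M r0 \<subseteq> colon M (a * r0)"
        proof
          fix t assume "t \<in> colon M r0"
          then have "a * (t * r0) \<in> M" using ideal_mult_left[OF M(1)] by (simp add: colon_mem)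
          then show "t \<in> colon M (a * r0)" by (simp add: colon_mem mult_ac)
        qed
        then have eq: "colon M (a * r0) = colon M r0" by (rule maxr[OF ar])
        have "b \<in> colon M (a * r0)" using ab by (simp add: colon_mem mult_ac)
        then show ?thesis using eq by simp
      qed
    qed
    have "y \<in> colon M r0" using ideal_mult_right[OF M(1) M(3)] by (simp add: colon_mem)
    then have py: "principal_ideal y \<subseteq> colon M r0" by (rule principal_sub[OF colon_ideal[OF M(1)]])
    show "P \<subseteq> colon M r0"
    proof
      fix p assume "p \<in> P"
      then obtain n where "p ^ n \<in> principal_ideal y" using rad by blast
      then have "p ^ n \<in> colon M r0" using py by auto
      then show "p \<in> colon M r0" by (rule prime_pow[OF cp])
    qed
  qed
  define I2 where "I2 = sat P (plus_elem M r0)"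
  have I2id: "is_ideal I2" unfolding I2_def by (rule sat_ideal[OF Pp plus_elem_ideal[OF M(1)]])
  have I2s: "satd P I2" unfolding I2_def by (rule sat_satd[OF Pp])
  have MI2: "M \<subseteq> I2" unfolding I2_def using plus_elem_sub sat_sub[OF Pp] by blast
  have r0I2: "r0 \<in> I2" unfolding I2_def using plus_elem_x[OF M(1)] sat_sub[OF Pp] by blast
  have "I2 \<noteq> M" using r0I2 r0(1) by auto
  then have D2: "DCCab P I2" using max[OF I2id I2s _ _ MI2] MI2 M(3) by blast
  have two: "J = M \<or> J = I2" if J: "is_ideal J" "satd P J" "M \<subseteq> J" "J \<subseteq> I2" for J
  proof (cases "J = M")
    case True then show ?thesis by simp
  next
    case False
    then obtain j where j: "j \<in> J" "j \<notin> M" using J(3) by blast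
    then have "j \<in> I2" using J(4) by blast
    then obtain s where s: "s \<notin> P" "s * j \<in> plus_elem M r0" unfolding I2_def sat_mem by blast
    then obtain i c where ic: "i \<in> M" "s * j = i + r0 * c" unfolding plus_elem_mem by blast
    have cP: "c \<notin> P"
    proof
      assume "c \<in> P"
      then have "c * r0 \<in> M" using colP by (simp add: colon_mem[symmetric])
      then have "s * j \<in> M" using ic ideal_add[OF M(1)] by (simp add: mult.commute)
      then show False using satdD[OF M(2) s(1)] j(2) by blast
    qed
    have "c * r0 = s * j - i" using ic by (simp add: mult.commute)
    also have "\<dots> \<in> J" using ideal_diff[OF J(1) ideal_mult_left[OF J(1) j(1)]] ic(1) J(3) by blast
    finally have "r0 \<in> J" using satdD[OF J(2) cP] by blast
    then have "plus_elem M r0 \<subseteq> J" by (rule plus_elem_least[OF J(1) J(3)])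
    then have "I2 \<subseteq> J" unfolding I2_def by (rule sat_least[OF J(2)])
    then show ?thesis using J(4) by blast
  qed
  have "DCCab P M"
    unfolding DCCab_def
  proof (intro allI impI)
    fix f assume hf: "\<forall>n. is_ideal (f n) \<and> satd P (f n) \<and> M \<subseteq> f n \<and> f (Suc n) \<subseteq> f n"
    have fid: "is_ideal (f n)" and fs: "satd P (f n)" and fM: "M \<subseteq> f n" and fd: "f (Suc n) \<subseteq> f n" for n
      using hf by auto
    have fanti: "f n' \<subseteq> f n" if "n \<le> n'" for n n'
      using lift_Suc_antimono_le[of f, OF fd that] .
    define g where "g n = sat P (sum_id (f n) I2)" for n
    have "\<exists>N. \<forall>n\<ge>N. g n = g N"
    proof (rule DCCabD[OF D2])
      fix n
      show "is_ideal (g n)" unfolding g_def by (rule sat_ideal[OF Pp sum_id_ideal[OF fid I2id]])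
      show "satd P (g n)" unfolding g_def by (rule sat_satd[OF Pp])
      show "I2 \<subseteq> g n" unfolding g_def using sum_id_right[OF fid] sat_sub[OF Pp] by blast
      show "g (Suc n) \<subseteq> g n" unfolding g_def by (intro sat_mono sum_id_mono fd) simp
    qed
    then obtain N1 where N1: "\<forall>n\<ge>N1. g n = g N1" by blast
    define h where "h n = f n \<inter> I2" for n
    have h2: "h n = M \<or> h n = I2" for n unfolding h_def
      by (rule two) (use ideal_Int[OF fid I2id] satd_Int[OF fs I2s] fM MI2 in auto)
    have "\<exists>N. \<forall>n\<ge>N. h n = h N"
    proof (cases "\<exists>n. h n = M")
      case True
      then obtain n0 where n0: "h n0 = M" by blast
      have "h n = h n0" if "n \<ge> n0" for n
      proof -
        have "h n \<subseteq> h n0" unfolding h_def using fanti[OF that] by blast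
        moreover have "M \<subseteq> h n" unfolding h_def using fM MI2 by blast
        ultimately show ?thesis using n0 by blast
      qed
      then show ?thesis by blast
    next
      case False
      then have "h n = I2" for n using h2 by blast
      then show ?thesis by simp
    qed
    then obtain N2 where N2: "\<forall>n\<ge>N2. h n = h N2" by blast
    define N where "N = max N1 N2"
    have "f n = f N" if n: "n \<ge> N" for n
    proof
      show "f n \<subseteq> f N" using fanti n by simp
      show "f N \<subseteq> f n"
      proof
        fix c assume c: "c \<in> f N"
        have "c \<in> g N" unfolding g_def using c sum_id_left[OF I2id] sat_sub[OF Pp] by blast
        moreover have "g N = g n" using spec[OF N1, of N] spec[OF N1, of n] n by (simp add: N_def)
        ultimately have "c \<in> g n" by simp
        then obtain s where s: "s \<notin> P" "s * c \<in> sum_id (f n) I2" unfolding g_def sat_mem by blast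
        then obtain a b where ab: "a \<in> f n" "b \<in> I2" "s * c = a + b" unfolding sum_id_mem by blast
        have "a \<in> f N" using ab(1) fanti n by blast
        then have "s * c - a \<in> f N" using ideal_diff[OF fid ideal_mult_left[OF fid c]] by blast
        then have "b \<in> h N" unfolding h_def using ab by (simp add: algebra_simps)
        moreover have "h N = h n" using spec[OF N2, of N] spec[OF N2, of n] n by (simp add: N_def)
        ultimately have "b \<in> f n" unfolding h_def by simp
        then have "s * c \<in> f n" using ab ideal_add[OF fid] by simp
        then show "c \<in> f n" using satdD[OF fs s(1)] by blast
      qed
    qed
    then show "\<exists>N. \<forall>n\<ge>N. f n = f N" by blast
  qed
  with M(4) show False by blast
qed



lemma stepB:
  assumes N: "noetherian_ring TYPE('a::idom)" and Pp: "is_prime_ideal P" and Qp: "is_prime_ideal Q"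
    and QP: "Q \<subseteq> P" and yP: "(y::'a) \<in> P" and yQ: "y \<notin> Q"
    and Zn: "is_ideal Zn" "satd Q Zn" and Zn1: "is_ideal Zn1" "satd Q Zn1" and sub: "Zn1 \<subseteq> Zn"
    and H: "Zn \<subseteq> sat P (sum_id (principal_ideal y) Zn1)"
  shows "Zn \<subseteq> Zn1"
proof (rule ccontr)
  assume "\<not> Zn \<subseteq> Zn1"
  let ?D = "{sat P (plus_elem Zn1 r) | r. r \<in> Zn \<and> r \<notin> Zn1}"
  have "?D \<noteq> {}" using \<open>\<not> Zn \<subseteq> Zn1\<close> by blast
  moreover have "\<And>K. K \<in> ?D \<Longrightarrow> is_ideal K" using sat_ideal[OF Pp plus_elem_ideal[OF Zn1(1)]] by blast
  ultimately obtain K0 where K0: "K0 \<in> ?D" and maxD: "\<forall>K\<in>?D. K0 \<subseteq> K \<longrightarrow> K = K0"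
    using noeth_max[OF N] by meson
  obtain r where r: "r \<in> Zn" "r \<notin> Zn1" "K0 = sat P (plus_elem Zn1 r)" using K0 by blast
  have SQ: "s \<notin> Q" if "s \<notin> P" for s using that QP by blast
  have "r \<in> sat P (sum_id (principal_ideal y) Zn1)" using r(1) H by blast
  then obtain s where s: "s \<notin> P" "s * r \<in> sum_id (principal_ideal y) Zn1"
    unfolding sat_mem by blast
  then obtain p b where pb: "p \<in> principal_ideal y" "b \<in> Zn1" "s * r = p + b" unfolding sum_id_mem by blast
  then obtain a where pa: "p = y * a" unfolding principal_mem by (auto simp: dvd_def)
  have "y * a = s * r - b" using pb pa by simp
  also have "\<dots> \<in> Zn" using ideal_diff[OF Zn(1) ideal_mult_left[OF Zn(1) r(1)]] pb(2) sub by blast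
  finally have aZn: "a \<in> Zn" using satdD[OF Zn(2) yQ] by blast
  have aZn1: "a \<notin> Zn1"
  proof
    assume "a \<in> Zn1"
    then have "s * r \<in> Zn1" using pb pa ideal_add[OF Zn1(1) ideal_mult_left[OF Zn1(1)]] by simp
    then show False using satdD[OF Zn1(2) SQ[OF s(1)]] r(2) by blast
  qed
  define K' where "K' = sat P (plus_elem Zn1 a)"
  have K'D: "K' \<in> ?D" unfolding K'_def using aZn aZn1 by blast
  have K'id: "is_ideal K'" unfolding K'_def by (rule sat_ideal[OF Pp plus_elem_ideal[OF Zn1(1)]])
  have K's: "satd P K'" unfolding K'_def by (rule sat_satd[OF Pp])
  have Zn1K': "Zn1 \<subseteq> K'" unfolding K'_def using plus_elem_sub sat_sub[OF Pp] by blast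
  have "s * r \<in> plus_elem Zn1 a" unfolding plus_elem_mem using pb pa by (intro exI[of _ b] exI[of _ y]) (simp add: mult.commute add.commute)
  then have "s * r \<in> K'" unfolding K'_def using sat_sub[OF Pp] by blast
  then have "r \<in> K'" using satdD[OF K's s(1)] by blast
  then have "plus_elem Zn1 r \<subseteq> K'" by (rule plus_elem_least[OF K'id Zn1K'])
  then have "K0 \<subseteq> K'" unfolding r(3) by (rule sat_least[OF K's])
  then have "K' = K0" using maxD K'D by blast
  moreover have "a \<in> K'" unfolding K'_def using plus_elem_x[OF Zn1(1)] sat_sub[OF Pp] by blast
  ultimately have "a \<in> sat P (plus_elem Zn1 r)" using r(3) by simp
  then obtain u where u: "u \<notin> P" "u * a \<in> plus_elem Zn1 r" unfolding sat_mem by blast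
  then obtain b' t where bt: "b' \<in> Zn1" "u * a = b' + r * t" unfolding plus_elem_mem by blast
  have "(u * s - y * t) * r = u * (s * r) - y * (t * r)" by (simp add: algebra_simps)
  also have "\<dots> = u * b + y * (u * a) - y * (t * r)" using pb(3) pa by (simp add: algebra_simps)
  also have "\<dots> = u * b + y * b'" unfolding bt(2) by (simp add: algebra_simps)
  also have "\<dots> \<in> Zn1" using ideal_add[OF Zn1(1) ideal_mult_left[OF Zn1(1) pb(2)] ideal_mult_left[OF Zn1(1) bt(1)]] .
  finally have X: "(u * s - y * t) * r \<in> Zn1" .
  have "u * s - y * t \<notin> Q"
  proof
    assume "u * s - y * t \<in> Q"
    then have "u * s - y * t \<in> P" using QP by blast
    moreover have "y * t \<in> P" using ideal_mult_right[OF prime_ideal[OF Pp] yP] .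
    ultimately have "(u * s - y * t) + y * t \<in> P" by (rule ideal_add[OF prime_ideal[OF Pp]])
    then have "u * s \<in> P" by simp
    then show False using prime_mult_notin[OF Pp u(1) s(1)] by blast
  qed
  then have "r \<in> Zn1" using satdD[OF Zn1(2)] X by blast
  with r(2) show False by blast
qed

lemma pit:
  assumes N: "noetherian_ring TYPE('a::idom)" and Pp: "is_prime_ideal P" and yP: "(y::'a) \<in> P"
    and rad: "\<And>p. p \<in> P \<Longrightarrow> \<exists>n. p ^ n \<in> principal_ideal y"
    and Qp: "is_prime_ideal Q" and QP: "Q \<subseteq> P" and yQ: "y \<notin> Q" and zQ: "z \<in> Q" and z0: "z \<noteq> 0"
  shows False
proof -
  define Z where "Z n = sat Q (principal_ideal (z ^ n))" for n
  have Zid: "is_ideal (Z n)" for n unfolding Z_def by (rule sat_ideal[OF Qp principal_ideal])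
  have Zs: "satd Q (Z n)" for n unfolding Z_def by (rule sat_satd[OF Qp])
  have ZsP: "satd P (Z n)" for n by (rule satd_mono_prime[OF QP Zs])
  have Zd: "Z (Suc n) \<subseteq> Z n" for n
    unfolding Z_def by (rule sat_mono, rule principal_sub[OF principal_ideal]) (simp add: principal_mem)
  define C where "C n = sat P (sum_id (principal_ideal y) (Z n))" for n
  define Y where "Y = sat P (principal_ideal y)"
  have Yid: "is_ideal Y" unfolding Y_def by (rule sat_ideal[OF Pp principal_ideal])
  have Ys: "satd P Y" unfolding Y_def by (rule sat_satd[OF Pp])
  have yY: "y \<in> Y" unfolding Y_def using sat_sub[OF Pp] principal_self by blast
  have "DCCab P Y" by (rule dcc[OF N Pp yP rad Yid Ys yY])
  then have "\<exists>N. \<forall>n\<ge>N. C n = C N"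
  proof (rule DCCabD)
    fix n
    show "is_ideal (C n)" unfolding C_def by (rule sat_ideal[OF Pp sum_id_ideal[OF principal_ideal Zid]])
    show "satd P (C n)" unfolding C_def by (rule sat_satd[OF Pp])
    show "Y \<subseteq> C n" unfolding C_def Y_def by (intro sat_mono sum_id_left Zid)
    show "C (Suc n) \<subseteq> C n" unfolding C_def by (intro sat_mono sum_id_mono Zd) simp
  qed
  then obtain N0 where N0: "\<forall>n\<ge>N0. C n = C N0" by blast
  have CC: "C (Suc N0) = C N0" using spec[OF N0, of "Suc N0"] by simp
  have "Z N0 \<subseteq> C N0" unfolding C_def using sum_id_right[OF principal_ideal] sat_sub[OF Pp] by blast
  then have "Z N0 \<subseteq> sat P (sum_id (principal_ideal y) (Z (Suc N0)))" using CC unfolding C_def by simp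
  then have "Z N0 \<subseteq> Z (Suc N0)"
    by (rule stepB[OF N Pp Qp QP yP yQ Zid Zs Zid Zs Zd])
  moreover have "z ^ N0 \<in> Z N0" unfolding Z_def using sat_sub[OF Qp] principal_self by blast
  ultimately have "z ^ N0 \<in> Z (Suc N0)" by blast
  then obtain s where s: "s \<notin> Q" "s * z ^ N0 \<in> principal_ideal (z ^ Suc N0)" unfolding Z_def sat_mem by blast
  then obtain c where "s * z ^ N0 = z ^ Suc N0 * c" unfolding principal_mem by (auto simp: dvd_def)
  then have "z ^ N0 * s = z ^ N0 * (z * c)" by (simp add: mult_ac)
  then have "s = z * c" using z0 by simp
  then have "s \<in> Q" using ideal_mult_right[OF prime_ideal[OF Qp] zQ] by simp
  with s(1) show False by blast
qed



theorem corollary2p8: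
  assumes "noetherian_ring TYPE('a::idom)"
  shows "((\<forall>B :: 'a fract set. is_sublocalization B \<longrightarrow> is_localization B) \<longleftrightarrow>
          (\<forall>(x::'a) P. associated_prime P (principal_ideal x) \<longrightarrow>
              (\<exists>y. P = radical (principal_ideal y))))
       \<and> ((\<forall>B :: 'a fract set. is_sublocalization B \<longrightarrow> is_localization B) \<longrightarrow>
          (\<forall>(x::'a) P. x \<noteq> 0 \<longrightarrow> \<not> embedded_associated_prime P (principal_ideal x)))"
proof (intro conjI iffI)
  assume G: "\<forall>B :: 'a fract set. is_sublocalization B \<longrightarrow> is_localization B"
  show "\<forall>(x::'a) P. associated_prime P (principal_ideal x) \<longrightarrow> (\<exists>y. P = radical (principal_ideal y))"
    using nec[OF assms G] by blast
next
  assume H: "\<forall>(x::'a) P. associated_prime P (principal_ideal x) \<longrightarrow> (\<exists>y. P = radical (principal_ideal y))"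
  show "\<forall>B :: 'a fract set. is_sublocalization B \<longrightarrow> is_localization B"
    using suff[OF assms H] by blast
next
  show "(\<forall>B :: 'a fract set. is_sublocalization B \<longrightarrow> is_localization B) \<longrightarrow>
          (\<forall>(x::'a) P. x \<noteq> 0 \<longrightarrow> \<not> embedded_associated_prime P (principal_ideal x))"
  proof (intro impI allI notI)
    fix x :: 'a and P
    assume G: "\<forall>B :: 'a fract set. is_sublocalization B \<longrightarrow> is_localization B" and x0: "x \<noteq> 0"
    assume "embedded_associated_prime P (principal_ideal x)"
    then obtain Q where AP: "associated_prime P (principal_ideal x)"
      and AQ: "associated_prime Q (principal_ideal x)" and QP: "Q \<subset> P"
      unfolding embedded_associated_prime_def by blast
    obtain y where Py: "P = radical (principal_ideal y)" using nec[OF assms G AP] by blast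
    obtain a where "minimal_prime_over P (colon (principal_ideal x) a)"
      using AP unfolding associated_prime_def by blast
    then have Pp: "is_prime_ideal P" unfolding minimal_prime_over_def by blast
    obtain b where mQ: "minimal_prime_over Q (colon (principal_ideal x) b)"
      using AQ unfolding associated_prime_def by blast
    then have Qp: "is_prime_ideal Q" and CQ: "colon (principal_ideal x) b \<subseteq> Q"
      unfolding minimal_prime_over_def by blast+
    have "x \<in> colon (principal_ideal x) b" by (simp add: colon_mem principal_mem)
    then have xQ: "x \<in> Q" using CQ by blast
    have yP: "y \<in> P" unfolding Py using radical_sub principal_self by blast
    have rad: "\<exists>n. p ^ n \<in> principal_ideal y" if "p \<in> P" for p
      using that unfolding Py radical_mem .
    have yQ: "y \<notin> Q"
    proof
      assume "y \<in> Q"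
      then have "principal_ideal y \<subseteq> Q" by (rule principal_sub[OF prime_ideal[OF Qp]])
      then have "P \<subseteq> Q" unfolding Py by (rule radical_prime[OF Qp])
      with QP show False by blast
    qed
    have QsP: "Q \<subseteq> P" using QP by (rule psubset_imp_subset)
    show False by (rule pit[OF assms Pp yP rad Qp QsP yQ xQ x0])
  qed
qed

end
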